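(* Let $(\mathcal{Y},\eta)$ be an $(n,m)$-voltage operator and let $\tau\in\operatorname{Aut}(\mathcal{Y})$ be such that there exists a group homomorphism $\tau^\#:\mathcal{C}^n\to\mathcal{C}^n$ with $\tau^\#(\eta(W))=\eta(W\tau)$ for every $W\in\Pi(\mathcal{Y})$. Then for every $n$-premaniplex $\mathcal{X}$, the premaniplex $\mathcal{X}^{\tau^\#}\rtimes_\eta\mathcal{Y}$ is isomorphic to $\mathcal{X}\rtimes_\eta\mathcal{Y}$.
   Context: An $n$-premaniplex is an edge-coloured graph (semi-edges and parallel edges allowed) with colours $\{0,\dots,n-1\}$ such that every vertex (flag) is the start of exactly one dart of each colour, and for $|i-j|\ge2$ alternating $i,j$-paths of length 4 are closed; $x^i$ is the $i$-adjacent flag of $x$. $\mathcal{C}^n=\langle r_0,\dots,r_{n-1}\mid r_i^2,\ (r_ir_j)^2\ (|i-j|\ge2)\rangle$ acts on the left on flags by $r_ix=x^i$. Isomorphisms are bijections on flags preserving $i$-adjacency for all $i$; automorphisms act on the right and map paths to paths, $W\mapsto W\tau$. For a flag $y$ of an $m$-premaniplex $\mathcal{Y}$ and $\omega\in\mathcal{C}^m$, $W_\omega(y)$ is the homotopy class of paths from $y$ whose colour sequence $i_1,\dots,i_k$ satisfies $r_{i_k}\cdots r_{i_1}=\omega$; these form the fundamental groupoid $\Pi(\mathcal{Y})$. A voltage assignment $\eta:\Pi(\mathcal{Y})\to\mathcal{C}^n$ satisfies $\eta(W_1W_2)=\eta(W_2)\eta(W_1)$; $(\mathcal{Y},\eta)$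 is an $(n,m)$-voltage operator. $\mathcal{X}\rtimes_\eta\mathcal{Y}$ has flags $\mathcal{X}\times\mathcal{Y}$ and $(x,y)^i=(\eta(W_{r_i}(y))x,r_iy)$, $i\in\{0,\dots,m-1\}$. Given a homomorphism $\tau^\#:\mathcal{C}^n\to\mathcal{C}^n$, $\mathcal{X}^{\tau^\#}$ is the $n$-premaniplex with the same flags as $\mathcal{X}$ in which the $i$-adjacent flag of $x$ is $\tau^\#(r_i)x$ (computed in $\mathcal{X}$). *)

theory Defs
  imports "HOL-Algebra.Group"
begin

text \<open>Words over colours {0..<n}; the word [a1,...,ak] represents r_a1 ... r_ak.
  cox_eq n is the congruence generated by r_i^2 = 1 and (r_i r_j)^2 = 1 for |i-j| >= 2.\<close>

inductive cox_eq :: "nat \<Rightarrow> nat list \<Rightarrow> nat list \<Rightarrow> bool" for n :: nat where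
  cox_refl: "set w \<subseteq> {..<n} \<Longrightarrow> cox_eq n w w"
| cox_sym: "cox_eq n v w \<Longrightarrow> cox_eq n w v"
| cox_trans: "cox_eq n u v \<Longrightarrow> cox_eq n v w \<Longrightarrow> cox_eq n u w"
| cox_cancel: "i < n \<Longrightarrow> set u \<subseteq> {..<n} \<Longrightarrow> set v \<subseteq> {..<n} \<Longrightarrow>
      cox_eq n (u @ [i, i] @ v) (u @ v)"
| cox_comm: "i < n \<Longrightarrow> j < n \<Longrightarrow> i + 2 \<le> j \<Longrightarrow> set u \<subseteq> {..<n} \<Longrightarrow> set v \<subseteq> {..<n} \<Longrightarrow>
      cox_eq n (u @ [i, j] @ v) (u @ [j, i] @ v)"

definition cox_class :: "nat \<Rightarrow> nat list \<Rightarrow> nat list set" where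
  "cox_class n w = {v. cox_eq n w v}"

definition Cox :: "nat \<Rightarrow> nat list set monoid" where
  "Cox n = \<lparr> carrier = cox_class n ` {w. set w \<subseteq> {..<n}},
             mult = (\<lambda>A B. \<Union>a\<in>A. \<Union>b\<in>B. cox_class n (a @ b)),
             one = cox_class n [] \<rparr>"

definition gen :: "nat \<Rightarrow> nat \<Rightarrow> nat list set" where
  "gen n i = cox_class n [i]"

text \<open>A premaniplex is given by its flag set F and the adjacency functions
  adj i x = x^i (semi-edges: adj i x = x; parallel edges allowed).\<close>
definition premaniplex :: "nat \<Rightarrow> 'a set \<Rightarrow> (nat \<Rightarrow> 'a \<Rightarrow> 'a) \<Rightarrow> bool" where
  "premaniplex n F adj \<longleftrightarrow>
     (\<forall>i<n. \<forall>x\<in>F. adj i x \<in> F \<and> adj i (adj i x) = x) \<and>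
     (\<forall>i<n. \<forall>j<n. i + 2 \<le> j \<or> j + 2 \<le> i \<longrightarrow>
        (\<forall>x\<in>F. adj j (adj i (adj j (adj i x))) = x))"

text \<open>Left action of words: the word [a1,...,ak] (= r_a1 ... r_ak) sends x to
  r_a1 (r_a2 (... (r_ak x))).\<close>
definition word_act :: "(nat \<Rightarrow> 'a \<Rightarrow> 'a) \<Rightarrow> nat list \<Rightarrow> 'a \<Rightarrow> 'a" where
  "word_act adj w x = foldr adj w x"

definition cox_act :: "(nat \<Rightarrow> 'a \<Rightarrow> 'a) \<Rightarrow> nat list set \<Rightarrow> 'a \<Rightarrow> 'a" where
  "cox_act adj g x = word_act adj (SOME w. w \<in> g) x"

definition premaniplex_iso ::
  "nat \<Rightarrow> 'a set \<Rightarrow> (nat \<Rightarrow> 'a \<Rightarrow> 'a) \<Rightarrow> 'b set \<Rightarrow> (nat \<Rightarrow> 'b \<Rightarrow> 'b) \<Rightarrow> ('a \<Rightarrow> 'b) \<Rightarrow> bool" where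
  "premaniplex_iso n F1 adj1 F2 adj2 f \<longleftrightarrow>
     bij_betw f F1 F2 \<and> (\<forall>i<n. \<forall>x\<in>F1. f (adj1 i x) = adj2 i (f x))"

definition isomorphic_premaniplexes ::
  "nat \<Rightarrow> 'a set \<Rightarrow> (nat \<Rightarrow> 'a \<Rightarrow> 'a) \<Rightarrow> 'b set \<Rightarrow> (nat \<Rightarrow> 'b \<Rightarrow> 'b) \<Rightarrow> bool" where
  "isomorphic_premaniplexes n F1 adj1 F2 adj2 \<longleftrightarrow> (\<exists>f. premaniplex_iso n F1 adj1 F2 adj2 f)"

definition automorphism :: "nat \<Rightarrow> 'a set \<Rightarrow> (nat \<Rightarrow> 'a \<Rightarrow> 'a) \<Rightarrow> ('a \<Rightarrow> 'a) \<Rightarrow> bool" where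
  "automorphism n F adj tau \<longleftrightarrow> premaniplex_iso n F adj F adj tau"

text \<open>The element W_\<omega>(y) of the fundamental groupoid of Y is represented by the pair (y, \<omega>),
  with y a flag of Y and \<omega> \<in> C^m; it ends at \<omega> y, and
  W_\<omega>(y) W_\<nu>(\<omega> y) = W_{\<nu>\<omega>}(y).  A voltage assignment is encoded as
  eta y \<omega> = \<eta>(W_\<omega>(y)).  An automorphism tau maps W_\<omega>(y) to W_\<omega>(y tau).\<close>
definition voltage_assignment ::
  "nat \<Rightarrow> nat \<Rightarrow> 'y set \<Rightarrow> (nat \<Rightarrow> 'y \<Rightarrow> 'y) \<Rightarrow> ('y \<Rightarrow> nat list set \<Rightarrow> nat list set) \<Rightarrow> bool" where
  "voltage_assignment n m FY adjY eta \<longleftrightarrow>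
     (\<forall>y\<in>FY. \<forall>\<omega>\<in>carrier (Cox m). eta y \<omega> \<in> carrier (Cox n)) \<and>
     (\<forall>y\<in>FY. \<forall>\<omega>\<in>carrier (Cox m). \<forall>\<nu>\<in>carrier (Cox m).
        eta y (\<nu> \<otimes>\<^bsub>Cox m\<^esub> \<omega>) = eta (cox_act adjY \<omega> y) \<nu> \<otimes>\<^bsub>Cox n\<^esub> eta y \<omega>)"

definition voltage_operator ::
  "nat \<Rightarrow> nat \<Rightarrow> 'y set \<Rightarrow> (nat \<Rightarrow> 'y \<Rightarrow> 'y) \<Rightarrow> ('y \<Rightarrow> nat list set \<Rightarrow> nat list set) \<Rightarrow> bool" where
  "voltage_operator n m FY adjY eta \<longleftrightarrow>
     premaniplex m FY adjY \<and> voltage_assignment n m FY adjY eta"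

text \<open>Adjacency of X \<rtimes>_\<eta> Y (flags FX \<times> FY): (x,y)^i = (\<eta>(W_{r_i}(y)) x, r_i y).\<close>
definition mix_adj ::
  "nat \<Rightarrow> (nat \<Rightarrow> 'x \<Rightarrow> 'x) \<Rightarrow> (nat \<Rightarrow> 'y \<Rightarrow> 'y) \<Rightarrow> ('y \<Rightarrow> nat list set \<Rightarrow> nat list set)
     \<Rightarrow> nat \<Rightarrow> 'x \<times> 'y \<Rightarrow> 'x \<times> 'y" where
  "mix_adj m adjX adjY eta i p =
     (cox_act adjX (eta (snd p) (gen m i)) (fst p), adjY i (snd p))"

text \<open>Adjacency of X^{\<tau>#}: the i-adjacent flag of x is \<tau>#(r_i) x computed in X.\<close>
definition twist_adj ::
  "nat \<Rightarrow> (nat \<Rightarrow> 'x \<Rightarrow> 'x) \<Rightarrow> (nat list set \<Rightarrow> nat list set) \<Rightarrow> nat \<Rightarrow> 'x \<Rightarrow> 'x" where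
  "twist_adj n adjX tsharp i x = cox_act adjX (tsharp (gen n i)) x"

end

theory Submission
  imports Defs
begin

lemma cox_eq_set:
  assumes "cox_eq n v w" shows "set v \<subseteq> {..<n} \<and> set w \<subseteq> {..<n}"
  using assms by induction auto

lemma cox_eq_appl:
  assumes "cox_eq n v w" "set u \<subseteq> {..<n}" shows "cox_eq n (u @ v) (u @ w)"
  using assms
proof induction
  case (cox_refl w) then show ?case by (intro cox_eq.cox_refl) auto
next
  case (cox_sym v w) then show ?case by (auto intro: cox_eq.cox_sym)
next
  case (cox_trans u v w) then show ?case by (auto intro: cox_eq.cox_trans)
next
  case (cox_cancel i u' v) then show ?case
    using cox_eq.cox_cancel[of i n "u @ u'" v] by auto
next
  case (cox_comm i j u' v) then show ?case
    using cox_eq.cox_comm[of i n j "u @ u'" v] by auto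
qed

lemma cox_eq_appr:
  assumes "cox_eq n v w" "set u \<subseteq> {..<n}" shows "cox_eq n (v @ u) (w @ u)"
  using assms
proof induction
  case (cox_refl w) then show ?case by (intro cox_eq.cox_refl) auto
next
  case (cox_sym v w) then show ?case by (auto intro: cox_eq.cox_sym)
next
  case (cox_trans u v w) then show ?case by (auto intro: cox_eq.cox_trans)
next
  case (cox_cancel i u' v) then show ?case
    using cox_eq.cox_cancel[of i n u' "v @ u"] by auto
next
  case (cox_comm i j u' v) then show ?case
    using cox_eq.cox_comm[of i n j u' "v @ u"] by auto
qed

lemma cox_eq_app:
  assumes "cox_eq n a a'" "cox_eq n b b'" shows "cox_eq n (a @ b) (a' @ b')"
proof -
  have "cox_eq n (a @ b) (a' @ b)"
    using cox_eq_appr assms cox_eq_set by blast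
  moreover have "cox_eq n (a' @ b) (a' @ b')"
    using cox_eq_appl assms cox_eq_set by blast
  ultimately show ?thesis by (rule cox_eq.cox_trans)
qed

lemma cox_class_eq:
  assumes "cox_eq n u v" shows "cox_class n u = cox_class n v"
  using assms unfolding cox_class_def
  by (auto intro: cox_eq.cox_trans cox_eq.cox_sym)

lemma cox_class_mem: "set w \<subseteq> {..<n} \<Longrightarrow> w \<in> cox_class n w"
  unfolding cox_class_def by (auto intro: cox_eq.cox_refl)

lemma cox_mult:
  assumes "set a \<subseteq> {..<n}" "set b \<subseteq> {..<n}"
  shows "cox_class n a \<otimes>\<^bsub>Cox n\<^esub> cox_class n b = cox_class n (a @ b)"
proof -
  have "cox_class n (a' @ b') = cox_class n (a @ b)"
    if "a' \<in> cox_class n a" "b' \<in> cox_class n b" for a' b'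
    using that cox_class_eq cox_eq_app unfolding cox_class_def by (metis mem_Collect_eq)
  then have "(\<Union>a'\<in>cox_class n a. \<Union>b'\<in>cox_class n b. cox_class n (a' @ b')) = cox_class n (a @ b)"
    using assms cox_class_mem[of a n] cox_class_mem[of b n] by blast
  then show ?thesis unfolding Cox_def by simp
qed

lemma word_act_closed:
  assumes "premaniplex n F adj" "set w \<subseteq> {..<n}" "x \<in> F"
  shows "word_act adj w x \<in> F"
proof -
  have "\<forall>i<n. \<forall>x\<in>F. adj i x \<in> F" using assms(1) unfolding premaniplex_def by blast
  then show ?thesis using assms(2,3) by (induction w) (auto simp: word_act_def)
qed

lemma premaniplex_comm:
  assumes "premaniplex n F adj" "i < n" "j < n" "i + 2 \<le> j" "z \<in> F"
  shows "adj i (adj j z) = adj j (adj i z)"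
proof -
  have inv: "\<And>k y. k < n \<Longrightarrow> y \<in> F \<Longrightarrow> adj k y \<in> F \<and> adj k (adj k y) = y"
    using assms(1) unfolding premaniplex_def by blast
  have c: "adj i (adj j (adj i (adj j z))) = z"
    using assms unfolding premaniplex_def by auto
  define u where "u = adj j z"
  have uF: "u \<in> F" using inv assms unfolding u_def by auto
  have c1: "adj i (adj j (adj i u)) = z" using c unfolding u_def .
  have "adj j (adj i u) = adj i z"
    using arg_cong[OF c1, of "adj i"] inv[of i "adj j (adj i u)"] inv uF assms by auto
  then have "adj j (adj j (adj i u)) = adj j (adj i z)" by simp
  then show ?thesis using inv[of j "adj i u"] inv[of i u] uF assms unfolding u_def by auto
qed

lemma prem_inv:
  assumes "premaniplex n F adj" "k < n" "y \<in> F"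
  shows "adj k y \<in> F" "adj k (adj k y) = y"
  using assms unfolding premaniplex_def by blast+

lemma word_act_cox:
  assumes "premaniplex n F adj" "cox_eq n v w" "x \<in> F"
  shows "word_act adj v x = word_act adj w x"
  using assms(2,3)
proof (induction arbitrary: x)
  case (cox_refl w) then show ?case by simp
next
  case (cox_sym v w) then show ?case by (metis)
next
  case (cox_trans u v w) then show ?case by (metis)
next
  case (cox_cancel i u v)
  have "word_act adj v x \<in> F" using word_act_closed[OF assms(1) cox_cancel(3,4)] .
  then have "adj i (adj i (foldr adj v x)) = foldr adj v x"
    using prem_inv[OF assms(1) cox_cancel(1)] by (simp add: word_act_def)
  then show ?case by (simp add: word_act_def)
next
  case (cox_comm i j u v)
  have "word_act adj v x \<in> F" using word_act_closed[OF assms(1) cox_comm(5,6)] .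
  then have "adj i (adj j (foldr adj v x)) = adj j (adj i (foldr adj v x))"
    using premaniplex_comm[OF assms(1) cox_comm(1,2,3)] by (simp add: word_act_def)
  then show ?case by (simp add: word_act_def)
qed

lemma cox_act_class:
  assumes "premaniplex n F adj" "set w \<subseteq> {..<n}" "x \<in> F"
  shows "cox_act adj (cox_class n w) x = word_act adj w x"
proof -
  have "(SOME v. v \<in> cox_class n w) \<in> cox_class n w"
    using cox_class_mem[OF assms(2)] by (rule someI)
  then have "cox_eq n w (SOME v. v \<in> cox_class n w)" unfolding cox_class_def by simp
  then show ?thesis unfolding cox_act_def using word_act_cox[OF assms(1) _ assms(3)]
    by (simp add: cox_eq.cox_sym)
qed

lemma word_act_rev:
  assumes "premaniplex n F adj" "set w \<subseteq> {..<n}" "x \<in> F"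
  shows "word_act adj (rev w) (word_act adj w x) = x"
  using assms(2,3)
proof (induction w arbitrary: x)
  case Nil then show ?case by (simp add: word_act_def)
next
  case (Cons a w)
  have "word_act adj w x \<in> F" using word_act_closed assms(1) Cons by auto
  moreover have "adj a (adj a (word_act adj w x)) = word_act adj w x"
    using prem_inv(2)[OF assms(1)] Cons calculation by auto
  ultimately show ?case using Cons by (simp add: word_act_def)
qed

lemma carrier_Cox: "g \<in> carrier (Cox n) \<Longrightarrow> \<exists>w. set w \<subseteq> {..<n} \<and> g = cox_class n w"
  unfolding Cox_def by auto

lemma class_in_carrier: "set w \<subseteq> {..<n} \<Longrightarrow> cox_class n w \<in> carrier (Cox n)"
  unfolding Cox_def by auto

lemma twist_lemma:
  assumes X: "premaniplex n FX adjX" and h: "tsharp \<in> hom (Cox n) (Cox n)"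
    and "set w \<subseteq> {..<n}" "x \<in> FX"
  shows "word_act (twist_adj n adjX tsharp) w x = cox_act adjX (tsharp (cox_class n w)) x"
  using assms(3,4)
proof (induction w arbitrary: x)
  case Nil
  have c0: "cox_class n [] \<in> carrier (Cox n)" by (rule class_in_carrier) simp
  then obtain v where v: "set v \<subseteq> {..<n}" "tsharp (cox_class n []) = cox_class n v"
    using h carrier_Cox unfolding hom_def by (metis (no_types, lifting) Pi_iff mem_Collect_eq)
  have "tsharp (cox_class n [] \<otimes>\<^bsub>Cox n\<^esub> cox_class n []) =
        tsharp (cox_class n []) \<otimes>\<^bsub>Cox n\<^esub> tsharp (cox_class n [])"
    using h c0 unfolding hom_def by blast
  then have e: "cox_class n v = cox_class n (v @ v)"
    using v cox_mult[of "[]" n "[]"] cox_mult[OF v(1) v(1)] by simp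
  have A: "word_act adjX v x = word_act adjX v (word_act adjX v x)"
    using cox_act_class[OF X v(1) Nil(2)] cox_act_class[OF X _ Nil(2), of "v @ v"] e v(1)
    by (simp add: word_act_def)
  have "x = word_act adjX (rev v) (word_act adjX v x)"
    using word_act_rev[OF X v(1) Nil(2)] by simp
  also have "\<dots> = word_act adjX v x"
    using A word_act_rev[OF X v(1) word_act_closed[OF X v(1) Nil(2)]] by simp
  finally show ?case using v cox_act_class[OF X v(1) Nil(2)] by (simp add: word_act_def)
next
  case (Cons a w)
  have a: "set [a] \<subseteq> {..<n}" and w: "set w \<subseteq> {..<n}" using Cons by auto
  have ca: "cox_class n [a] \<in> carrier (Cox n)" and cw: "cox_class n w \<in> carrier (Cox n)"
    using class_in_carrier a w by auto
  obtain p where p: "set p \<subseteq> {..<n}" "tsharp (cox_class n [a]) = cox_class n p"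
    using h ca carrier_Cox unfolding hom_def by (metis (no_types, lifting) Pi_iff mem_Collect_eq)
  obtain q where q: "set q \<subseteq> {..<n}" "tsharp (cox_class n w) = cox_class n q"
    using h cw carrier_Cox unfolding hom_def by (metis (no_types, lifting) Pi_iff mem_Collect_eq)
  have "tsharp (cox_class n [a] \<otimes>\<^bsub>Cox n\<^esub> cox_class n w) =
        tsharp (cox_class n [a]) \<otimes>\<^bsub>Cox n\<^esub> tsharp (cox_class n w)"
    using h ca cw unfolding hom_def by blast
  then have t: "tsharp (cox_class n (a # w)) = cox_class n (p @ q)"
    using cox_mult[OF a w] cox_mult[OF p(1) q(1)] p q by simp
  have "word_act (twist_adj n adjX tsharp) (a # w) x =
        twist_adj n adjX tsharp a (word_act (twist_adj n adjX tsharp) w x)"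
    by (simp add: word_act_def)
  also have "\<dots> = twist_adj n adjX tsharp a (cox_act adjX (tsharp (cox_class n w)) x)"
    using Cons.IH[OF w Cons.prems(2)] by simp
  also have "\<dots> = cox_act adjX (tsharp (gen n a)) (cox_act adjX (tsharp (cox_class n w)) x)"
    by (simp only: twist_adj_def)
  also have "\<dots> = word_act adjX p (word_act adjX q x)"
    using p q cox_act_class[OF X q(1) Cons(3)]
      cox_act_class[OF X p(1) word_act_closed[OF X q(1) Cons(3)]]
    by (simp add: gen_def)
  also have "\<dots> = cox_act adjX (tsharp (cox_class n (a # w))) x"
    using t cox_act_class[OF X _ Cons(3), of "p @ q"] p q by (simp add: word_act_def)
  finally show ?case .
qed

theorem theorem6p3:
  fixes n m :: nat
    and FY :: "'y set" and adjY :: "nat \<Rightarrow> 'y \<Rightarrow> 'y"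
    and eta :: "'y \<Rightarrow> nat list set \<Rightarrow> nat list set"
    and tau :: "'y \<Rightarrow> 'y"
    and tsharp :: "nat list set \<Rightarrow> nat list set"
    and FX :: "'x set" and adjX :: "nat \<Rightarrow> 'x \<Rightarrow> 'x"
  assumes "voltage_operator n m FY adjY eta"
    and "automorphism m FY adjY tau"
    and "tsharp \<in> hom (Cox n) (Cox n)"
    and "\<forall>y\<in>FY. \<forall>\<omega>\<in>carrier (Cox m). tsharp (eta y \<omega>) = eta (tau y) \<omega>"
    and "premaniplex n FX adjX"
  shows "isomorphic_premaniplexes m
           (FX \<times> FY) (mix_adj m (twist_adj n adjX tsharp) adjY eta)
           (FX \<times> FY) (mix_adj m adjX adjY eta)"
proof -
  have bt: "bij_betw tau FY FY" and ct: "\<forall>i<m. \<forall>y\<in>FY. tau (adjY i y) = adjY i (tau y)"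
    using assms(2) unfolding automorphism_def premaniplex_iso_def by auto
  have eC: "\<And>y g. y \<in> FY \<Longrightarrow> g \<in> carrier (Cox m) \<Longrightarrow> eta y g \<in> carrier (Cox n)"
    using assms(1) unfolding voltage_operator_def voltage_assignment_def by blast
  define f where "f = (\<lambda>(x::'x, y). (x, tau y))"
  have "bij_betw f (FX \<times> FY) (FX \<times> FY)"
  proof -
    have "inj_on f (FX \<times> FY)" using bt unfolding f_def bij_betw_def inj_on_def by auto
    moreover have "f ` (FX \<times> FY) = FX \<times> FY"
    proof
      show "f ` (FX \<times> FY) \<subseteq> FX \<times> FY" using bt unfolding f_def bij_betw_def by auto
      show "FX \<times> FY \<subseteq> f ` (FX \<times> FY)"
      proof
        fix p assume "p \<in> FX \<times> FY"
        then obtain x y where xy: "p = (x, y)" "x \<in> FX" "y \<in> FY" by auto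
        then obtain y' where "y' \<in> FY" "y = tau y'" using bt unfolding bij_betw_def by auto
        then show "p \<in> f ` (FX \<times> FY)" using xy unfolding f_def by force
      qed
    qed
    ultimately show ?thesis unfolding bij_betw_def by blast
  qed
  moreover have "f (mix_adj m (twist_adj n adjX tsharp) adjY eta i p) = mix_adj m adjX adjY eta i (f p)"
    if i: "i < m" and p: "p \<in> FX \<times> FY" for i p
  proof -
    obtain x y where xy: "p = (x, y)" "x \<in> FX" "y \<in> FY" using p by auto
    have gC: "gen m i \<in> carrier (Cox m)" unfolding gen_def using i by (intro class_in_carrier) auto
    obtain w0 where w0: "set w0 \<subseteq> {..<n}" "eta y (gen m i) = cox_class n w0"
      using carrier_Cox eC[OF xy(3) gC] by blast
    define w where "w = (SOME v. v \<in> eta y (gen m i))"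
    have "w \<in> cox_class n w0" unfolding w_def w0(2) using cox_class_mem[OF w0(1)] by (rule someI)
    then have ew: "cox_eq n w0 w" unfolding cox_class_def by simp
    then have sw: "set w \<subseteq> {..<n}" using cox_eq_set by blast
    have "cox_act (twist_adj n adjX tsharp) (eta y (gen m i)) x
        = word_act (twist_adj n adjX tsharp) w x" unfolding cox_act_def w_def by simp
    also have "\<dots> = cox_act adjX (tsharp (cox_class n w)) x"
      by (rule twist_lemma[OF assms(5) assms(3) sw xy(2)])
    also have "\<dots> = cox_act adjX (tsharp (eta y (gen m i))) x"
      using cox_class_eq[OF ew] w0 by simp
    also have "\<dots> = cox_act adjX (eta (tau y) (gen m i)) x"
      using assms(4) xy(3) gC by simp
    finally show ?thesis using xy ct i unfolding f_def mix_adj_def by simp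
  qed
  ultimately show ?thesis
    unfolding isomorphic_premaniplexes_def premaniplex_iso_def by blast
qed

end
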